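(* Let $\mathsf{V}$ be the subvariety of $V(\mathsf{BCA})$ axiomatised, relative to $V(\mathsf{BCA})$, by $J_2\neg x\approx\neg J_2x$. Then every $\mathbf{A}\in\mathsf{V}$ embeds into a direct product $\mathbf{B}\times\mathbf{C}$ for some $\mathbf{B}\in\mathsf{BA}$ and some $\mathbf{C}\in\mathsf{SL}$.
   Context: $\mathbf{WK}^e$ is the three-element algebra on $\{0,\tfrac12,1\}$ of type $\langle\wedge,\vee,\neg,J_2,0,1\rangle$. Its operations are: - $\neg$ swaps $0,1$ and fixes $\tfrac12$; - $\wedge,\vee$ are Boolean on $\{0,1\}$ and return $\tfrac12$ if some argument is $\tfrac12$; - $J_2(1)=1$ and $J_2(\tfrac12)=J_2(0)=0$. $\mathsf{BCA}=ISP(\mathbf{WK}^e)$ and $V(\mathsf{BCA})=HSP(\mathbf{WK}^e)$. $\mathsf{BA}$ is the subvariety of $V(\mathsf{BCA})$ axiomatised relative to it by $J_2x\approx x$. $\mathsf{SL}$ is the subvariety axiomatised relative to it by $J_2x\approx1$. *)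

theory Defs
  imports Main
begin

record 'a alg =
  carrier :: "'a set"
  meet :: "'a \<Rightarrow> 'a \<Rightarrow> 'a"
  join :: "'a \<Rightarrow> 'a \<Rightarrow> 'a"
  neg :: "'a \<Rightarrow> 'a"
  jtwo :: "'a \<Rightarrow> 'a"
  zero :: 'a
  one :: 'a

definition is_alg :: "'a alg \<Rightarrow> bool" where
  "is_alg A \<longleftrightarrow>
     (\<forall>x\<in>carrier A. \<forall>y\<in>carrier A. meet A x y \<in> carrier A \<and> join A x y \<in> carrier A) \<and>
     (\<forall>x\<in>carrier A. neg A x \<in> carrier A \<and> jtwo A x \<in> carrier A) \<and>
     zero A \<in> carrier A \<and> one A \<in> carrier A"

datatype trm = Var nat | Meet trm trm | Join trm trm | Neg trm | J2 trm | Zero | One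

primrec eval :: "'a alg \<Rightarrow> (nat \<Rightarrow> 'a) \<Rightarrow> trm \<Rightarrow> 'a" where
  "eval A \<rho> (Var n) = \<rho> n"
| "eval A \<rho> (Meet s t) = meet A (eval A \<rho> s) (eval A \<rho> t)"
| "eval A \<rho> (Join s t) = join A (eval A \<rho> s) (eval A \<rho> t)"
| "eval A \<rho> (Neg s) = neg A (eval A \<rho> s)"
| "eval A \<rho> (J2 s) = jtwo A (eval A \<rho> s)"
| "eval A \<rho> Zero = zero A"
| "eval A \<rho> One = one A"

definition sat :: "'a alg \<Rightarrow> trm \<Rightarrow> trm \<Rightarrow> bool" where
  "sat A s t \<longleftrightarrow> (\<forall>\<rho>. (\<forall>n. \<rho> n \<in> carrier A) \<longrightarrow> eval A \<rho> s = eval A \<rho> t)"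

datatype wk = W0 | Wh | W1

fun wk_neg :: "wk \<Rightarrow> wk" where
  "wk_neg W0 = W1" | "wk_neg Wh = Wh" | "wk_neg W1 = W0"

fun wk_meet :: "wk \<Rightarrow> wk \<Rightarrow> wk" where
  "wk_meet Wh _ = Wh" | "wk_meet _ Wh = Wh"
| "wk_meet W1 W1 = W1" | "wk_meet _ _ = W0"

fun wk_join :: "wk \<Rightarrow> wk \<Rightarrow> wk" where
  "wk_join Wh _ = Wh" | "wk_join _ Wh = Wh"
| "wk_join W0 W0 = W0" | "wk_join _ _ = W1"

fun wk_J2 :: "wk \<Rightarrow> wk" where
  "wk_J2 W1 = W1" | "wk_J2 _ = W0"

definition WKe :: "wk alg" where
  "WKe = \<lparr>carrier = UNIV, meet = wk_meet, join = wk_join, neg = wk_neg,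
          jtwo = wk_J2, zero = W0, one = W1\<rparr>"

text \<open>V(BCA) = HSP(WK^e), presented (Birkhoff) as the class of algebras
  satisfying every identity valid in WK^e.\<close>
definition VBCA :: "'a alg \<Rightarrow> bool" where
  "VBCA A \<longleftrightarrow> is_alg A \<and> (\<forall>s t. sat WKe s t \<longrightarrow> sat A s t)"

definition BA :: "'a alg \<Rightarrow> bool" where
  "BA A \<longleftrightarrow> VBCA A \<and> sat A (J2 (Var 0)) (Var 0)"

definition SL :: "'a alg \<Rightarrow> bool" where
  "SL A \<longleftrightarrow> VBCA A \<and> sat A (J2 (Var 0)) One"

definition Vnegfix :: "'a alg \<Rightarrow> bool" where
  "Vnegfix A \<longleftrightarrow> VBCA A \<and> sat A (J2 (Neg (Var 0))) (Neg (J2 (Var 0)))"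

definition prod_alg :: "'b alg \<Rightarrow> 'c alg \<Rightarrow> ('b \<times> 'c) alg" where
  "prod_alg B C = \<lparr>carrier = carrier B \<times> carrier C,
     meet = (\<lambda>(b,c) (b',c'). (meet B b b', meet C c c')),
     join = (\<lambda>(b,c) (b',c'). (join B b b', join C c c')),
     neg = (\<lambda>(b,c). (neg B b, neg C c)),
     jtwo = (\<lambda>(b,c). (jtwo B b, jtwo C c)),
     zero = (zero B, zero C), one = (one B, one C)\<rparr>"

definition hom :: "'a alg \<Rightarrow> 'b alg \<Rightarrow> ('a \<Rightarrow> 'b) \<Rightarrow> bool" where
  "hom A B f \<longleftrightarrow> f ` carrier A \<subseteq> carrier B \<and>
     (\<forall>x\<in>carrier A. \<forall>y\<in>carrier A.
        f (meet A x y) = meet B (f x) (f y) \<and> f (join A x y) = join B (f x) (f y)) \<and>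
     (\<forall>x\<in>carrier A. f (neg A x) = neg B (f x) \<and> f (jtwo A x) = jtwo B (f x)) \<and>
     f (zero A) = zero B \<and> f (one A) = one B"

definition embedding :: "'a alg \<Rightarrow> 'b alg \<Rightarrow> ('a \<Rightarrow> 'b) \<Rightarrow> bool" where
  "embedding A B f \<longleftrightarrow> hom A B f \<and> inj_on f (carrier A)"

end

theory Submission
  imports Defs
begin

lemma eval_hom:
  assumes "hom A B f" "\<forall>n. \<sigma> n \<in> carrier A" "is_alg A"
  shows "f (eval A \<sigma> t) = eval B (f \<circ> \<sigma>) t \<and> eval A \<sigma> t \<in> carrier A"
  using assms by (induction t) (auto simp: hom_def is_alg_def)

lemma hom_image_sat:
  assumes h: "hom A B f" and s: "f ` carrier A = carrier B" and a: "is_alg A"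
    and st: "sat A s t"
  shows "sat B s t"
  unfolding sat_def
proof (intro allI impI)
  fix \<rho> :: "nat \<Rightarrow> 'b" assume r: "\<forall>n. \<rho> n \<in> carrier B"
  define \<sigma> where "\<sigma> (n::nat) = inv_into (carrier A) f (\<rho> n)" for n
  have sc: "\<forall>n. \<sigma> n \<in> carrier A" using r s unfolding \<sigma>_def by (metis inv_into_into)
  have fs: "f \<circ> \<sigma> = \<rho>" using r s unfolding \<sigma>_def by (auto simp: f_inv_into_f)
  have "eval A \<sigma> s = eval A \<sigma> t" using st sc by (simp add: sat_def)
  then show "eval B \<rho> s = eval B \<rho> t"
    using eval_hom[OF h sc a, of s] eval_hom[OF h sc a, of t] fs by simp
qed

lemma hom_image_alg:
  assumes h: "hom A B f" and s: "f ` carrier A = carrier B" and a: "is_alg A"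
  shows "is_alg B"
proof -
  have "\<forall>x\<in>carrier B. \<forall>y\<in>carrier B. meet B x y \<in> carrier B \<and> join B x y \<in> carrier B"
  proof (intro ballI)
    fix x y assume "x \<in> carrier B" "y \<in> carrier B"
    then obtain x' y' where "x' \<in> carrier A" "y' \<in> carrier A" "x = f x'" "y = f y'"
      using s by blast
    then show "meet B x y \<in> carrier B \<and> join B x y \<in> carrier B"
      using h a s unfolding hom_def is_alg_def by (metis image_eqI)
  qed
  moreover have "\<forall>x\<in>carrier B. neg B x \<in> carrier B \<and> jtwo B x \<in> carrier B"
  proof
    fix x assume "x \<in> carrier B"
    then obtain x' where "x' \<in> carrier A" "x = f x'" using s by blast
    then show "neg B x \<in> carrier B \<and> jtwo B x \<in> carrier B"
      using h a s unfolding hom_def is_alg_def by (metis image_eqI)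
  qed
  moreover have "zero B \<in> carrier B \<and> one B \<in> carrier B"
    using h a s unfolding hom_def is_alg_def by (metis image_eqI)
  ultimately show ?thesis unfolding is_alg_def by blast
qed

lemma hom_image_VBCA:
  assumes h: "hom A B f" and s: "f ` carrier A = carrier B" and a: "VBCA A"
  shows "VBCA B"
  using a hom_image_alg[OF h s] hom_image_sat[OF h s] unfolding VBCA_def by blast

lemma wk_use:
  assumes "VBCA A" "sat WKe s t" "x \<in> carrier A" "y \<in> carrier A"
  shows "eval A (\<lambda>n. if n = 0 then x else y) s = eval A (\<lambda>n. if n = 0 then x else y) t"
  using assms unfolding VBCA_def sat_def by auto

abbreviation "X \<equiv> Var 0"
abbreviation "Y \<equiv> Var (Suc 0)"

lemma w1: "sat WKe (J2 (Meet X Y)) (Meet (J2 X) (J2 Y))" unfolding sat_def apply (intro allI impI) apply (case_tac "\<rho> 0"; case_tac "\<rho> (Suc 0)") by (simp_all add: WKe_def)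
lemma w2: "sat WKe (J2 (Join X Y)) (Meet (Join (J2 X) (J2 Y)) (Meet (Join (J2 X) (J2 (Neg X))) (Join (J2 Y) (J2 (Neg Y)))))" unfolding sat_def apply (intro allI impI) apply (case_tac "\<rho> 0"; case_tac "\<rho> (Suc 0)") by (simp_all add: WKe_def)
lemma w3: "sat WKe (Meet (Join (J2 X) (J2 Y)) (Meet (Join (J2 X) (Neg (J2 X))) (Join (J2 Y) (Neg (J2 Y))))) (Join (J2 X) (J2 Y))" unfolding sat_def apply (intro allI impI) apply (case_tac "\<rho> 0"; case_tac "\<rho> (Suc 0)") by (simp_all add: WKe_def)
lemma w4: "sat WKe (J2 Zero) Zero" unfolding sat_def apply (intro allI impI) apply (case_tac "\<rho> 0"; case_tac "\<rho> (Suc 0)") by (simp_all add: WKe_def)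
lemma w5: "sat WKe (J2 One) One" unfolding sat_def apply (intro allI impI) apply (case_tac "\<rho> 0"; case_tac "\<rho> (Suc 0)") by (simp_all add: WKe_def)
lemma w6: "sat WKe (J2 (J2 X)) (J2 X)" unfolding sat_def apply (intro allI impI) apply (case_tac "\<rho> 0"; case_tac "\<rho> (Suc 0)") by (simp_all add: WKe_def)
lemma w7: "sat WKe (Meet (Meet X Y) Zero) (Meet (Meet X Zero) (Meet Y Zero))" unfolding sat_def apply (intro allI impI) apply (case_tac "\<rho> 0"; case_tac "\<rho> (Suc 0)") by (simp_all add: WKe_def)
lemma w8: "sat WKe (Meet (Join X Y) Zero) (Meet (Meet X Zero) (Meet Y Zero))" unfolding sat_def apply (intro allI impI) apply (case_tac "\<rho> 0"; case_tac "\<rho> (Suc 0)") by (simp_all add: WKe_def)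
lemma w9: "sat WKe (Meet (Neg X) Zero) (Meet X Zero)" unfolding sat_def apply (intro allI impI) apply (case_tac "\<rho> 0"; case_tac "\<rho> (Suc 0)") by (simp_all add: WKe_def)
lemma w10: "sat WKe (Meet (J2 X) Zero) Zero" unfolding sat_def apply (intro allI impI) apply (case_tac "\<rho> 0"; case_tac "\<rho> (Suc 0)") by (simp_all add: WKe_def)
lemma w11: "sat WKe (Meet Zero Zero) Zero" unfolding sat_def apply (intro allI impI) apply (case_tac "\<rho> 0"; case_tac "\<rho> (Suc 0)") by (simp_all add: WKe_def)
lemma w12: "sat WKe (Meet One Zero) Zero" unfolding sat_def apply (intro allI impI) apply (case_tac "\<rho> 0"; case_tac "\<rho> (Suc 0)") by (simp_all add: WKe_def)
lemma w13: "sat WKe X (Join (J2 X) (Meet X Zero))" unfolding sat_def apply (intro allI impI) apply (case_tac "\<rho> 0"; case_tac "\<rho> (Suc 0)") by (simp_all add: WKe_def)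

theorem theorem4p13:
  fixes A :: "'a alg"
  assumes "Vnegfix A"
  shows "\<exists>(B :: 'a alg) (C :: 'a alg) f.
           BA B \<and> SL C \<and> embedding A (prod_alg B C) f"
proof -
  have V: "VBCA A" and nf: "sat A (J2 (Neg (Var 0))) (Neg (J2 (Var 0)))"
    using assms unfolding Vnegfix_def by auto
  have alg: "is_alg A" using V unfolding VBCA_def by auto
  have nf': "jtwo A (neg A x) = neg A (jtwo A x)" if "x \<in> carrier A" for x
    using nf that unfolding sat_def by (auto dest: spec[of _ "\<lambda>_. x"])
  note u = wk_use[OF V]
  define B where "B = A\<lparr>carrier := jtwo A ` carrier A\<rparr>"
  define C where "C = \<lparr>carrier = (\<lambda>x. meet A x (zero A)) ` carrier A, meet = meet A,
      join = meet A, neg = (\<lambda>x. x), jtwo = (\<lambda>_. zero A), zero = zero A, one = zero A\<rparr>"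
  define g where "g x = meet A x (zero A)" for x
  have hB: "hom A B (jtwo A)"
    unfolding hom_def B_def
  proof (simp, intro conjI ballI)
    fix x y assume xy: "x \<in> carrier A" "y \<in> carrier A"
    show "jtwo A (meet A x y) = meet A (jtwo A x) (jtwo A y)"
      using u[OF w1 xy] by simp
    have "neg A x \<in> carrier A" "neg A y \<in> carrier A" using alg xy unfolding is_alg_def by auto
    then show "jtwo A (join A x y) = join A (jtwo A x) (jtwo A y)"
      using u[OF w2 xy] u[OF w3 xy] nf' xy by simp
  next
    fix x assume "x \<in> carrier A"
    then show "jtwo A (neg A x) = neg A (jtwo A x)" by (rule nf')
  next
    show "jtwo A (zero A) = zero A" using u[OF w4, of "zero A" "zero A"] alg
      unfolding is_alg_def by simp
    show "jtwo A (one A) = one A" using u[OF w5, of "zero A" "zero A"] alg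
      unfolding is_alg_def by simp
  qed
  have sB: "jtwo A ` carrier A = carrier B" unfolding B_def by simp
  have hC: "hom A C g"
    unfolding hom_def C_def g_def
  proof (simp, intro conjI ballI)
    fix x y assume xy: "x \<in> carrier A" "y \<in> carrier A"
    show "meet A (meet A x y) (zero A) = meet A (meet A x (zero A)) (meet A y (zero A))"
      using u[OF w7 xy] by simp
    show "meet A (join A x y) (zero A) = meet A (meet A x (zero A)) (meet A y (zero A))"
      using u[OF w8 xy] by simp
  next
    fix x assume x: "x \<in> carrier A"
    show "meet A (neg A x) (zero A) = meet A x (zero A)" using u[OF w9 x x] by simp
    show "meet A (jtwo A x) (zero A) = zero A" using u[OF w10 x x] by simp
  next
    have z: "zero A \<in> carrier A" using alg unfolding is_alg_def by simp
    show "meet A (zero A) (zero A) = zero A" using u[OF w11 z z] by simp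
    show "meet A (one A) (zero A) = zero A" using u[OF w12 z z] by simp
  qed
  have sC: "g ` carrier A = carrier C" unfolding C_def g_def by simp
  have VB: "VBCA B" by (rule hom_image_VBCA[OF hB sB V])
  have VC: "VBCA C" by (rule hom_image_VBCA[OF hC sC V])
  have "BA B" unfolding BA_def
  proof (intro conjI VB)
    show "sat B (J2 (Var 0)) (Var 0)" unfolding sat_def
    proof (intro allI impI)
      fix \<rho> :: "nat \<Rightarrow> 'a" assume "\<forall>n. \<rho> n \<in> carrier B"
      then obtain x where x: "x \<in> carrier A" "\<rho> 0 = jtwo A x" unfolding B_def by auto
      show "eval B \<rho> (J2 (Var 0)) = eval B \<rho> (Var 0)"
        using u[OF w6 x(1) x(1)] x unfolding B_def by simp
    qed
  qed
  moreover have "SL C" unfolding SL_def using VC by (simp add: sat_def C_def)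
  moreover have "embedding A (prod_alg B C) (\<lambda>x. (jtwo A x, g x))"
    unfolding embedding_def
  proof
    show "hom A (prod_alg B C) (\<lambda>x. (jtwo A x, g x))"
      using hB hC unfolding hom_def prod_alg_def by auto
    show "inj_on (\<lambda>x. (jtwo A x, g x)) (carrier A)"
    proof
      fix x y assume xy: "x \<in> carrier A" "y \<in> carrier A" "(jtwo A x, g x) = (jtwo A y, g y)"
      have "x = join A (jtwo A x) (g x)" using u[OF w13 xy(1) xy(1)] g_def by simp
      also have "\<dots> = join A (jtwo A y) (g y)" using xy(3) by simp
      also have "\<dots> = y" using u[OF w13 xy(2) xy(2)] g_def by simp
      finally show "x = y" .
    qed
  qed
  ultimately show ?thesis by blast
qed

end
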